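(* Let $m>n>0$ be relatively prime integers and $(r,s)\in\mathbb{Z}^2$. Then $(r,s)=\beta(m,n)$ if and only if $(s,\,r-2s)=\beta(2m+n,\,m)$.
   Context: For relatively prime integers $a>b>0$, $\beta(a,b)$ denotes the Bézout coefficients given by the Euclidean algorithm: with $a=q_1b+r_1$, $b=q_2r_1+r_2$, $\dots$, $r_{k-2}=q_kr_{k-1}+r_k$, $r_{k-1}=1$, $r_k=0$ ($r_{-1}=a$, $r_0=b$), write $\begin{pmatrix}a\\ b\end{pmatrix}=M\begin{pmatrix}1\\0\end{pmatrix}$ with $M=\prod_{i=1}^k\begin{pmatrix}q_i&1\\1&0\end{pmatrix}$; then $\beta(a,b)$ is the first row of $M^{-1}$, and $\beta(a,b)=(r,s)$ satisfies $ra+sb=1$. *)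

theory Defs
  imports "HOL-Analysis.Analysis"
begin

definition qmat :: "int \<Rightarrow> int^2^2" where
  "qmat q = (\<chi> i j. if i = 1 \<and> j = 1 then q else if i = 2 \<and> j = 2 then 0 else 1)"

(* M(a,b) = product of the matrices (q_i 1; 1 0) produced by the Euclidean algorithm
   on (a,b): a = q_1 b + r_1, b = q_2 r_1 + r_2, ..., until the remainder is 0. *)
function euclid_mat :: "int \<Rightarrow> int \<Rightarrow> int^2^2" where
  "euclid_mat a b = (if b \<le> 0 then mat 1 else qmat (a div b) ** euclid_mat b (a mod b))"
  by auto
termination
  by (relation "Wellfounded.measure (\<lambda>(a,b). nat b)") auto

declare euclid_mat.simps [simp del]

definition beta :: "int \<Rightarrow> int \<Rightarrow> int \<times> int" where
  "beta a b = (let R = matrix_inv (euclid_mat a b) $ 1 in (R $ 1, R $ 2))"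

end

theory Submission
  imports Defs
begin

definition qinv :: "int \<Rightarrow> int^2^2" where
  "qinv q = (\<chi> i j. if i = 1 \<and> j = 1 then 0 else if i = 2 \<and> j = 2 then -q else 1)"

lemma sum2: "(\<Sum>k\<in>(UNIV::2 set). f k) = f 1 + f 2"
  by (simp add: UNIV_2)

lemma qmat_qinv: "qmat q ** qinv q = mat 1" "qinv q ** qmat q = mat 1"
  by (auto simp: vec_eq_iff matrix_matrix_mult_def qmat_def qinv_def mat_def sum2 forall_2)

lemma inv_unique:
  fixes A B :: "int^2^2"
  assumes "A ** B = mat 1" "B ** A = mat 1"
  shows "matrix_inv A = B"
proof -
  have ex: "\<exists>B. A ** B = mat 1 \<and> B ** A = mat 1" using assms by blast
  define C where "C = matrix_inv A"
  have C: "A ** C = mat 1 \<and> C ** A = mat 1"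
    unfolding C_def matrix_inv_def using someI_ex[OF ex] by simp
  have "C = C ** (A ** B)" using assms by simp
  also have "\<dots> = (C ** A) ** B" by (simp add: matrix_mul_assoc)
  also have "\<dots> = B" using C by simp
  finally show ?thesis unfolding C_def .
qed

lemma euclid_inv: "\<exists>B. euclid_mat a b ** B = mat 1 \<and> B ** euclid_mat a b = mat 1"
proof (induction a b rule: euclid_mat.induct)
  case (1 a b)
  show ?case
  proof (cases "b \<le> 0")
    case True then have "euclid_mat a b = mat 1" by (subst euclid_mat.simps) simp
    then show ?thesis by (auto intro: exI[of _ "mat 1"])
  next
    case False
    then obtain B where B: "euclid_mat b (a mod b) ** B = mat 1" "B ** euclid_mat b (a mod b) = mat 1"
      using 1 by blast
    let ?Q = "qmat (a div b)"
    have e: "euclid_mat a b = ?Q ** euclid_mat b (a mod b)"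
      using False by (subst euclid_mat.simps) simp
    have "(?Q ** euclid_mat b (a mod b)) ** (B ** qinv (a div b)) = mat 1"
      by (metis B(1) matrix_mul_assoc matrix_mul_rid qmat_qinv(1))
    moreover have "(B ** qinv (a div b)) ** (?Q ** euclid_mat b (a mod b)) = mat 1"
      by (metis B(2) matrix_mul_assoc matrix_mul_rid qmat_qinv(2))
    ultimately show ?thesis unfolding e by blast
  qed
qed

theorem lemma2p2:
  fixes m n r s :: int
  assumes "0 < n" and "n < m" and "coprime m n"
  shows "(r, s) = beta m n \<longleftrightarrow> (s, r - 2 * s) = beta (2 * m + n) m"
proof -
  have d: "(2*m+n) div m = 2" and md: "(2*m+n) mod m = n" using assms
    by (simp_all add: div_pos_pos_trivial mod_pos_pos_trivial)
  have e: "euclid_mat (2*m+n) m = qmat 2 ** euclid_mat m n"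
    using assms d md by (subst euclid_mat.simps) simp
  obtain B where B: "euclid_mat m n ** B = mat 1" "B ** euclid_mat m n = mat 1"
    using euclid_inv by blast
  have iB: "matrix_inv (euclid_mat m n) = B" using inv_unique B by blast
  have "(qmat 2 ** euclid_mat m n) ** (B ** qinv 2) = mat 1"
    by (metis B(1) matrix_mul_assoc matrix_mul_rid qmat_qinv(1))
  moreover have "(B ** qinv 2) ** (qmat 2 ** euclid_mat m n) = mat 1"
    by (metis B(2) matrix_mul_assoc matrix_mul_rid qmat_qinv(2))
  ultimately have iB2: "matrix_inv (euclid_mat (2*m+n) m) = B ** qinv 2"
    unfolding e using inv_unique by blast
  have b1: "beta m n = (B $ 1 $ 1, B $ 1 $ 2)" unfolding beta_def iB by (simp add: Let_def)
  have b2: "beta (2*m+n) m = (B $ 1 $ 2, B $ 1 $ 1 - 2 * B $ 1 $ 2)"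
    unfolding beta_def iB2
    by (simp add: Let_def matrix_matrix_mult_def qinv_def sum2)
  show ?thesis unfolding b1 b2 by auto
qed

end
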